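(* Let $\Omega=(a_1,b_1)\times\cdots\times(a_n,b_n)\subset\mathbb{R}^n$ be a bounded box. There is a constant $C_H\in(0,4]$ such that for every admissible mesh size vector $h$ and all $u\in W_0^{1,2}(\overline{\Omega}_h)$, $$\sum_{x\in\Omega_h}\frac{u(x)^2}{\operatorname{dist}(x,\partial\Omega_h)^2}\mathbf{h}\le C_H\sum_{i=1}^n\sum_{x\in\overline{\Omega}_h\setminus\partial_i^+\Omega_h}|D_i^+u(x)|^2\mathbf{h}.$$
   Context: Admissible mesh: $h_i>0$, $a_i=k_ih_i$, $b_i=l_ih_i$, $k_i,l_i\in\mathbb{Z}$, $l_i-k_i>1$; $\mathbb{R}^n_h=\{(h_1z_1,\dots,h_nz_n):z_i\in\mathbb{Z}\}$, $\overline{\Omega}_h=\overline{\Omega}\cap\mathbb{R}^n_h$, $\Omega_h=\Omega\cap\mathbb{R}^n_h$, $\partial\Omega_h=\partial\Omega\cap\mathbb{R}^n_h$, $\partial_i^+\Omega_h=\partial\Omega_h\cap\{x_i=b_i\}$, $\mathbf{h}=h_1\cdots h_n$, $D_i^+u(x)=(u(x+h_ie_i)-u(x))/h_i$. $W_0^{1,2}(\overline{\Omega}_h)$ = functions $u:\overline{\Omega}_h\to\mathbb{R}$ vanishing on $\partial\Omega_h$. $\operatorname{dist}(x,\partial\Omega_h)$ is the Euclidean distance from $x$ to the set $\partial\Omega_h$. *)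

theory Defs
  imports "HOL-Analysis.Analysis"
begin

definition admissible_mesh :: "real^'n \<Rightarrow> real^'n \<Rightarrow> real^'n \<Rightarrow> bool" where
  "admissible_mesh a b h \<longleftrightarrow>
     (\<forall>i. h$i > 0 \<and> (\<exists>k l :: int. a$i = of_int k * h$i \<and> b$i = of_int l * h$i \<and> l - k > 1))"

definition grid :: "real^'n \<Rightarrow> (real^'n) set" where
  "grid h = {x. \<exists>z :: 'n \<Rightarrow> int. \<forall>i. x$i = h$i * of_int (z i)}"

definition grid_closure :: "real^'n \<Rightarrow> real^'n \<Rightarrow> real^'n \<Rightarrow> (real^'n) set" where
  "grid_closure a b h = cbox a b \<inter> grid h"

definition grid_interior :: "real^'n \<Rightarrow> real^'n \<Rightarrow> real^'n \<Rightarrow> (real^'n) set" where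
  "grid_interior a b h = box a b \<inter> grid h"

definition grid_boundary :: "real^'n \<Rightarrow> real^'n \<Rightarrow> real^'n \<Rightarrow> (real^'n) set" where
  "grid_boundary a b h = frontier (box a b) \<inter> grid h"

definition grid_upper_face :: "real^'n \<Rightarrow> real^'n \<Rightarrow> real^'n \<Rightarrow> 'n \<Rightarrow> (real^'n) set" where
  "grid_upper_face a b h i = grid_boundary a b h \<inter> {x. x$i = b$i}"

definition fwd_diff :: "real^'n \<Rightarrow> 'n \<Rightarrow> (real^'n \<Rightarrow> real) \<Rightarrow> real^'n \<Rightarrow> real" where
  "fwd_diff h i u x = (u (x + h$i *\<^sub>R axis i 1) - u x) / h$i"

end

theory Submission
  imports Defs
begin
lemma alg: fixes p A B :: real assumes "p \<ge> 0" "p = 0 \<Longrightarrow> B = 0"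
  shows "A^2/(p+1)^2 - 2*(A - B)*(A/(p+1)) \<le> B^2/p - A^2/(p+1)"
proof (cases "p = 0")
  case True then show ?thesis using assms by (simp add: power2_eq_square)
next
  case False
  define \<alpha> where "\<alpha> = A/(p+1)"
  define \<beta> where "\<beta> = B/p"
  have A: "A = (p+1)*\<alpha>" using assms unfolding \<alpha>_def by (simp add: field_simps)
  have B: "B = p*\<beta>" using False unfolding \<beta>_def by simp
  have "A^2/(p+1)^2 - 2*(A - B)*(A/(p+1)) - (B^2/p - A^2/(p+1)) = - p*(\<alpha>-\<beta>)^2"
  proof -
    have p1: "p+1 \<noteq> 0" using assms by simp
    have e1: "A^2/(p+1)^2 = \<alpha>^2" "A/(p+1) = \<alpha>" "A^2/(p+1) = (p+1)*\<alpha>^2" "B^2/p = p*\<beta>^2"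
      using p1 False unfolding A B by (simp_all add: power2_eq_square)
    show ?thesis unfolding e1 unfolding A B by (simp add: algebra_simps power2_eq_square)
  qed
  moreover have "p*(\<alpha>-\<beta>)^2 \<ge> 0" using assms by simp
  ultimately show ?thesis by linarith
qed

lemma hinv: fixes v :: "int \<Rightarrow> real" assumes "v k = 0"
  shows "(\<Sum>t\<in>{k<..k+int M}. (v t)^2/(of_int(t-k))^2 - 2*(v t - v(t-1))*(v t/of_int(t-k)))
     \<le> -((v(k+int M))^2/ real M)"
proof (induction M)
  case 0 then show ?case by simp
next
  case (Suc M)
  have S: "{k<..k+int (Suc M)} = insert (k+int M+1) {k<..k+int M}" by auto
  have "(\<Sum>t\<in>{k<..k+int (Suc M)}. (v t)^2/(of_int(t-k))^2 - 2*(v t - v(t-1))*(v t/of_int(t-k)))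
    = ((v (k+int M+1))^2/(real M+1)^2 - 2*(v (k+int M+1) - v(k+int M))*(v (k+int M+1)/(real M+1)))
      + (\<Sum>t\<in>{k<..k+int M}. (v t)^2/(of_int(t-k))^2 - 2*(v t - v(t-1))*(v t/of_int(t-k)))"
    unfolding S by (simp add: add.commute)
  also have "\<dots> \<le> ((v(k+int M))^2/real M - (v (k+int M+1))^2/(real M+1)) + -((v(k+int M))^2/ real M)"
    apply (rule add_mono[OF alg Suc.IH]) using assms by auto
  moreover have eq: "k + int (Suc M) = k + int M + 1" "real (Suc M) = real M + 1" by simp_all
  ultimately show ?case unfolding eq by simp
qed

lemma hardy_left: fixes v :: "int \<Rightarrow> real" assumes "v k = 0"
  shows "(\<Sum>t\<in>{k<..k+int M}. (v t)^2/(of_int(t-k))^2) \<le> 4 * (\<Sum>t\<in>{k..<k+int M}. (v (t+1) - v t)^2)"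
proof -
  let ?A = "{k<..k+int M}"
  define S1 where "S1 = (\<Sum>t\<in>?A. (v t)^2/(of_int(t-k))^2)"
  define S2 where "S2 = (\<Sum>t\<in>?A. (v t - v(t-1))*(v t/of_int(t-k)))"
  define S3 where "S3 = (\<Sum>t\<in>?A. (v t - v(t-1))^2)"
  have "S1 - 2*S2 = (\<Sum>t\<in>{k<..k+int M}. (v t)^2/(of_int(t-k))^2 - 2*(v t - v(t-1))*(v t/of_int(t-k)))"
    unfolding S1_def S2_def sum_distrib_left sum_subtractf[symmetric] by (rule sum.cong) (simp_all add: algebra_simps add_divide_distrib[symmetric])
  also have "\<dots> \<le> -((v(k+int M))^2/ real M)" by (rule hinv[of v k M, OF assms])
  also have "\<dots> \<le> 0" by simp
  finally have 1: "S1 \<le> 2*S2" by simp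
  have "2*S2 \<le> (\<Sum>t\<in>?A. 2*(v t - v(t-1))^2 + (v t/of_int(t-k))^2/2)"
    unfolding S2_def sum_distrib_left
  proof (rule sum_mono)
    fix t
    have amgm: "2*(x*y) \<le> 2*x^2 + y^2/2" for x y :: real
    proof -
      have "0 \<le> (2*x - y)^2" by simp
      then show ?thesis by (simp add: power2_eq_square algebra_simps)
    qed
    show "2 * ((v t - v (t - 1)) * (v t / real_of_int (t - k))) \<le> 2*(v t - v(t-1))^2 + (v t/of_int(t-k))^2/2"
      by (rule amgm)
  qed
  also have "\<dots> = 2*S3 + S1/2" unfolding S3_def S1_def sum.distrib sum_distrib_left sum_divide_distrib
    by (simp add: power_divide)
  finally have "S1 \<le> 4 * S3" using 1 by simp
  moreover have "S3 = (\<Sum>t\<in>{k..<k+int M}. (v (t+1) - v t)^2)"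
    unfolding S3_def by (rule sum.reindex_bij_witness[where i="\<lambda>t. t+1" and j="\<lambda>t. t-1"]) auto
  ultimately show ?thesis unfolding S1_def by simp
qed
lemma hardy_right: fixes v :: "int \<Rightarrow> real" assumes "v l = 0"
  shows "(\<Sum>t\<in>{l - int M..<l}. (v t)^2/(of_int(l-t))^2) \<le> 4 * (\<Sum>t\<in>{l - int M..<l}. (v (t+1) - v t)^2)"
proof -
  have h: "(\<Sum>t\<in>{-l<..-l+int M}. (v (-t))^2/(of_int(t-(-l)))^2) \<le> 4 * (\<Sum>t\<in>{-l..<-l+int M}. (v (-(t+1)) - v (-t))^2)"
    using hardy_left[of "\<lambda>t. v (-t)" "-l" M] assms by simp
  have e1: "(\<Sum>t\<in>{-l<..-l+int M}. (v (-t))^2/(of_int(t-(-l)))^2) = (\<Sum>t\<in>{l - int M..<l}. (v t)^2/(of_int(l-t))^2)"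
    by (rule sum.reindex_bij_witness[where i="\<lambda>t. -t" and j="\<lambda>t. -t"]) auto
  have e2: "(\<Sum>t\<in>{-l..<-l+int M}. (v (-(t+1)) - v (-t))^2) = (\<Sum>t\<in>{l - int M..<l}. (v (t+1) - v t)^2)"
    by (rule sum.reindex_bij_witness[where i="\<lambda>t. -t-1" and j="\<lambda>t. -t-1"]) (auto simp: power2_commute)
  show ?thesis using h unfolding e1 e2 .
qed

lemma hardy_1d: fixes v :: "int \<Rightarrow> real" assumes "v k = 0" "v l = 0" "k < l"
  shows "(\<Sum>t\<in>{k<..<l}. (v t)^2/(of_int(min (t-k) (l-t)))^2) \<le> 4*(\<Sum>t\<in>{k..<l}. (v(t+1) - v t)^2)"
proof -
  define m where "m = (l-k) div 2"
  define M1 where "M1 = nat m"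
  define M2 where "M2 = nat (l-k-m-1)"
  have m0: "0 \<le> m" "2*m \<le> l-k" "l-k \<le> 2*m+1" using assms(3) unfolding m_def by auto
  have M1: "int M1 = m" and M2: "int M2 = l-k-m-1" using m0 assms(3) unfolding M1_def M2_def by auto
  have U: "{k<..<l} = {k<..k+int M1} \<union> {l - int M2..<l}" unfolding M1 M2 using m0 by auto
  have D: "{k<..k+int M1} \<inter> {l - int M2..<l} = {}" unfolding M1 M2 by auto
  let ?f = "\<lambda>t. (v t)^2/(of_int(min (t-k) (l-t)))^2"
  let ?g = "\<lambda>t. (v(t+1) - v t)^2"
  have "(\<Sum>t\<in>{k<..<l}. ?f t) = (\<Sum>t\<in>{k<..k+int M1}. ?f t) + (\<Sum>t\<in>{l - int M2..<l}. ?f t)"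
    unfolding U by (rule sum.union_disjoint) (use D in auto)
  also have "(\<Sum>t\<in>{k<..k+int M1}. ?f t) = (\<Sum>t\<in>{k<..k+int M1}. (v t)^2/(of_int(t-k))^2)"
    by (rule sum.cong) (use m0 M1 in auto)
  also have "(\<Sum>t\<in>{l - int M2..<l}. ?f t) = (\<Sum>t\<in>{l - int M2..<l}. (v t)^2/(of_int(l-t))^2)"
    by (rule sum.cong) (use m0 M2 in auto)
  also have "(\<Sum>t\<in>{k<..k+int M1}. (v t)^2/(of_int(t-k))^2) + (\<Sum>t\<in>{l - int M2..<l}. (v t)^2/(of_int(l-t))^2)
     \<le> 4 * (\<Sum>t\<in>{k..<k+int M1}. ?g t) + 4 * (\<Sum>t\<in>{l - int M2..<l}. ?g t)"
    by (rule add_mono[OF hardy_left[of v k, OF assms(1)] hardy_right[of v l, OF assms(2)]])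
  also have "\<dots> = 4 * (\<Sum>t\<in>{k..<k+int M1} \<union> {l - int M2..<l}. ?g t)"
    using m0 assms(3) by (subst sum.union_disjoint) (auto simp: M1 M2 distrib_left)
  also have "\<dots> \<le> 4 * (\<Sum>t\<in>{k..<l}. ?g t)"
    by (intro mult_left_mono sum_mono2) (use m0 M1 M2 in auto)
  finally show ?thesis .
qed

definition upd :: "real^'n \<Rightarrow> 'n \<Rightarrow> real \<Rightarrow> real^'n" where
  "upd y j r = (\<chi> i. if i = j then r else y$i)"

lemma upd_nth[simp]: "(upd y j r)$i = (if i = j then r else y$i)"
  unfolding upd_def by simp

lemma grid_iff: "x \<in> grid h \<longleftrightarrow> (\<forall>i. \<exists>z::int. x$i = h$i * of_int z)"
  unfolding grid_def by (auto intro: choice)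

locale gsetup =
  fixes a b h :: "real^'n" and kk ll :: "'n \<Rightarrow> int"
  assumes hpos: "\<And>i. h$i > 0"
    and aeq: "\<And>i. a$i = of_int (kk i) * h$i" and beq: "\<And>i. b$i = of_int (ll i) * h$i"
    and kl: "\<And>i. ll i - kk i > 1"
begin

lemma ab: "a$i < b$i"
proof -
  have "real_of_int (kk i) < of_int (ll i)" using kl[of i] by simp
  then show ?thesis using hpos[of i] aeq beq by simp
qed

lemma box_ne: "box a b \<noteq> {}"
proof -
  have "(\<chi> i. (a$i + b$i)/2) \<in> box a b" using ab by (auto simp: mem_box_cart)
  then show ?thesis by auto
qed

lemma closure_iff: "x \<in> grid_closure a b h \<longleftrightarrow> (\<forall>i. a$i \<le> x$i \<and> x$i \<le> b$i) \<and> x \<in> grid h"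
  unfolding grid_closure_def by (auto simp: mem_box_cart)

lemma interior_iff: "x \<in> grid_interior a b h \<longleftrightarrow> (\<forall>i. a$i < x$i \<and> x$i < b$i) \<and> x \<in> grid h"
  unfolding grid_interior_def by (auto simp: mem_box_cart)

lemma boundary_iff: "x \<in> grid_boundary a b h \<longleftrightarrow> x \<in> grid_closure a b h \<and> (\<exists>i. x$i = a$i \<or> x$i = b$i)"
proof -
  have "x \<in> cbox a b - box a b \<longleftrightarrow> x \<in> cbox a b \<and> (\<exists>i. x$i = a$i \<or> x$i = b$i)"
  proof
    assume A: "x \<in> cbox a b - box a b"
    then obtain i where "\<not> (a$i < x$i \<and> x$i < b$i)" by (auto simp: mem_box_cart)
    moreover have "a$i \<le> x$i" "x$i \<le> b$i" using A by (auto simp: mem_box_cart)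
    ultimately have "x$i = a$i \<or> x$i = b$i" by linarith
    then show "x \<in> cbox a b \<and> (\<exists>i. x$i = a$i \<or> x$i = b$i)" using A by blast
  next
    assume "x \<in> cbox a b \<and> (\<exists>i. x$i = a$i \<or> x$i = b$i)"
    then show "x \<in> cbox a b - box a b" by (auto simp: mem_box_cart) (metis less_irrefl)+
  qed
  then show ?thesis unfolding grid_boundary_def grid_closure_def frontier_box using box_ne by auto
qed

lemma finite_closure: "finite (grid_closure a b h)"
proof -
  let ?F = "(\<lambda>z. \<chi> i. h$i * of_int (z i)) ` (Pi\<^sub>E UNIV (\<lambda>i. {kk i..ll i}))"
  have "finite ?F" by (intro finite_imageI finite_PiE) auto
  moreover have "grid_closure a b h \<subseteq> ?F"
  proof
    fix x assume x: "x \<in> grid_closure a b h"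
    then obtain z :: "'n \<Rightarrow> int" where z: "\<And>i. x$i = h$i * of_int (z i)"
      unfolding closure_iff grid_def by auto
    have "kk i \<le> z i \<and> z i \<le> ll i" for i
    proof -
      have "a$i \<le> x$i" "x$i \<le> b$i" using x unfolding closure_iff by auto
      then have "of_int (kk i) * h$i \<le> of_int (z i) * h$i" "of_int (z i) * h$i \<le> of_int (ll i) * h$i"
        unfolding z aeq beq by (simp_all add: mult.commute)
      then show ?thesis using hpos[of i] by (simp add: mult_le_cancel_right_pos)
    qed
    then show "x \<in> ?F" by (intro image_eqI[where x=z]) (auto simp: vec_eq_iff z)
  qed
  ultimately show ?thesis by (rule finite_subset[rotated])
qed

end


context gsetup begin

lemma per_dir:
  assumes u0: "\<forall>x\<in>grid_boundary a b h. u x = 0"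
  shows "(\<Sum>x\<in>grid_interior a b h. (u x)^2 / (min (x$j - a$j) (b$j - x$j))^2)
    \<le> 4 * (\<Sum>x\<in>grid_closure a b h - grid_upper_face a b h j. (fwd_diff h j u x)^2)"
proof -
  define c where "c = h$j"
  define K where "K = kk j"
  define L where "L = ll j"
  have c: "c > 0" using hpos unfolding c_def by simp
  have KL: "K < L" using kl[of j] unfolding K_def L_def by simp
  have aj: "a$j = c * of_int K" and bj: "b$j = c * of_int L"
    using aeq beq unfolding c_def K_def L_def by (simp_all add: mult.commute)
  define Cl where "Cl = grid_closure a b h"
  define P where "P y = upd y j (a$j)" for y
  define line where "line y t = upd y j (c * of_int t)" for y t
  define Y where "Y = P ` Cl"
  have fCl: "finite Cl" using finite_closure Cl_def by simp
  have fY: "finite Y" using fCl Y_def by simp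
  have line_nth: "(line y t)$i = (if i = j then c * of_int t else y$i)" for y t i
    unfolding line_def by simp
  have L1: "line y t \<in> Cl" if yY: "y \<in> Y" and tK: "K \<le> t" "t \<le> L" for y t
  proof -
    obtain x0 where x0: "x0 \<in> Cl" "y = P x0" using yY Y_def by auto
    have "a$i \<le> (line y t)$i \<and> (line y t)$i \<le> b$i" for i
    proof (cases "i = j")
      case True then show ?thesis using tK c by (simp add: line_nth aj bj)
    next
      case False then show ?thesis using x0 by (simp add: line_nth P_def Cl_def closure_iff)
    qed
    moreover have "line y t \<in> grid h" unfolding grid_iff
    proof
      fix i show "\<exists>z::int. (line y t)$i = h$i * of_int z"
      proof (cases "i=j")
        case True then show ?thesis by (auto simp: line_nth c_def)
      next
        case False then show ?thesis using x0 by (simp add: line_nth P_def Cl_def closure_iff grid_iff)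
      qed
    qed
    ultimately show ?thesis unfolding Cl_def closure_iff by auto
  qed
  have Yj: "y$j = a$j" if "y \<in> Y" for y using that unfolding Y_def P_def by auto
  have L2: "P (line y t) = y" if "y \<in> Y" for y t
    using Yj[OF that] by (simp add: vec_eq_iff P_def line_nth)
  have L3: "\<exists>t. K \<le> t \<and> t \<le> L \<and> x = line (P x) t" if xC: "x \<in> Cl" for x
  proof -
    obtain z::int where z: "x$j = h$j * of_int z" using xC unfolding Cl_def closure_iff grid_iff by blast
    have "a$j \<le> x$j" "x$j \<le> b$j" using xC unfolding Cl_def closure_iff by auto
    then have "c * of_int K \<le> c * of_int z" "c * of_int z \<le> c * of_int L" using z unfolding aj bj c_def by auto
    then have "K \<le> z" "z \<le> L" using c by (simp_all add: mult_le_cancel_left_pos)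
    moreover have "x = line (P x) z" using z by (simp add: vec_eq_iff line_nth P_def c_def)
    ultimately show ?thesis by blast
  qed
  have inj: "inj (line y)" for y
  proof (rule injI)
    fix s t assume "line y s = line y t"
    then have "(line y s)$j = (line y t)$j" by simp
    then show "s = t" using c by (simp add: line_nth)
  qed
  have fib: "{x \<in> Cl. P x = y} = line y ` {K..L}" if "y \<in> Y" for y
  proof
    show "{x \<in> Cl. P x = y} \<subseteq> line y ` {K..L}" using L3 by fastforce
    show "line y ` {K..L} \<subseteq> {x \<in> Cl. P x = y}" using L1[OF that] L2[OF that] by auto
  qed
  have bdK: "u (line y K) = 0" "u (line y L) = 0" if "y \<in> Y" for y
  proof -
    have "line y K \<in> grid_boundary a b h" "line y L \<in> grid_boundary a b h"
      unfolding boundary_iff using L1[OF that] KL by (auto simp: Cl_def line_nth aj bj intro!: exI[of _ j])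
    then show "u (line y K) = 0" "u (line y L) = 0" using u0 by auto
  qed
  have shift: "line y t + c *\<^sub>R axis j 1 = line y (t+1)" for y t
    by (simp add: vec_eq_iff line_nth axis_def algebra_simps)
  define f where "f x = (u x)^2 / (min (x$j - a$j) (b$j - x$j))^2" for x
  define F where "F x = (if a$j < x$j \<and> x$j < b$j then f x else 0)" for x
  define G where "G x = (if x$j \<noteq> b$j then (fwd_diff h j u x)^2 else 0)" for x
  have R: "(\<Sum>x\<in>grid_closure a b h - grid_upper_face a b h j. (fwd_diff h j u x)^2)
     = (\<Sum>y\<in>Y. \<Sum>t\<in>{K..L}. G (line y t))"
  proof -
    have "grid_closure a b h - grid_upper_face a b h j = {x\<in>Cl. x$j \<noteq> b$j}"
      by (auto simp: grid_upper_face_def boundary_iff Cl_def)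
    then have "(\<Sum>x\<in>grid_closure a b h - grid_upper_face a b h j. (fwd_diff h j u x)^2) = (\<Sum>x\<in>Cl. G x)"
      using sum.inter_filter[OF fCl] by (simp add: G_def)
    also have "\<dots> = (\<Sum>y\<in>Y. \<Sum>x\<in>{x\<in>Cl. P x = y}. G x)"
      by (rule sum.group[symmetric, OF fCl fY]) (auto simp: Y_def)
    also have "\<dots> = (\<Sum>y\<in>Y. \<Sum>t\<in>{K..L}. G (line y t))"
      by (rule sum.cong[OF refl]) (simp add: fib sum.reindex inj_on_subset[OF inj])
    finally show ?thesis .
  qed
  have "(\<Sum>x\<in>grid_interior a b h. f x) = (\<Sum>x\<in>grid_interior a b h. F x)"
    by (rule sum.cong) (auto simp: F_def interior_iff)
  also have "\<dots> \<le> (\<Sum>x\<in>Cl. F x)"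
    by (rule sum_mono2[OF fCl]) (auto simp: Cl_def closure_iff interior_iff F_def f_def less_imp_le)
  also have "\<dots> = (\<Sum>y\<in>Y. \<Sum>x\<in>{x\<in>Cl. P x = y}. F x)"
    by (rule sum.group[symmetric, OF fCl fY]) (auto simp: Y_def)
  also have "\<dots> = (\<Sum>y\<in>Y. \<Sum>t\<in>{K..L}. F (line y t))"
    by (rule sum.cong[OF refl]) (simp add: fib sum.reindex inj_on_subset[OF inj])
  also have "\<dots> \<le> (\<Sum>y\<in>Y. 4 * (\<Sum>t\<in>{K..L}. G (line y t)))"
  proof (rule sum_mono)
    fix y assume y: "y \<in> Y"
    define v where "v t = u (line y t)" for t
    have e1: "(\<Sum>t\<in>{K..L}. F (line y t)) = (1/c^2) * (\<Sum>t\<in>{K<..<L}. (v t)^2/(of_int(min (t-K) (L-t)))^2)"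
    proof -
      have "(\<Sum>t\<in>{K..L}. F (line y t)) = (\<Sum>t\<in>{K..L}. if K < t \<and> t < L then (1/c^2) * ((v t)^2/(of_int(min (t-K) (L-t)))^2) else 0)"
      proof (rule sum.cong[OF refl])
        fix t assume "t \<in> {K..L}"
        have m: "min (c * of_int t - c * of_int K) (c * of_int L - c * of_int t) = c * of_int (min (t-K) (L-t))"
        proof -
          have mm: "min (c*x) (c*y) = c * min x y" for x y :: real
            using c by (auto simp: min_def mult_le_cancel_left_pos)
          show ?thesis by (metis mm of_int_diff of_int_min right_diff_distrib)
        qed
        show "F (line y t) = (if K < t \<and> t < L then (1/c^2) * ((v t)^2/(of_int(min (t-K) (L-t)))^2) else 0)"
          using c by (simp add: F_def f_def line_nth aj bj m v_def power_mult_distrib)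
      qed
      also have "\<dots> = (\<Sum>t\<in>{t\<in>{K..L}. K < t \<and> t < L}. (1/c^2) * ((v t)^2/(of_int(min (t-K) (L-t)))^2))"
        by (rule sum.inter_filter[symmetric]) simp
      also have "{t\<in>{K..L}. K < t \<and> t < L} = {K<..<L}" by auto
      finally show ?thesis by (simp add: sum_distrib_left)
    qed
    have e2: "(\<Sum>t\<in>{K..L}. G (line y t)) = (1/c^2) * (\<Sum>t\<in>{K..<L}. (v (t+1) - v t)^2)"
    proof -
      have "(\<Sum>t\<in>{K..L}. G (line y t)) = (\<Sum>t\<in>{K..L}. if t \<noteq> L then (1/c^2) * (v (t+1) - v t)^2 else 0)"
      proof (rule sum.cong[OF refl])
        fix t assume "t \<in> {K..L}"
        have "fwd_diff h j u (line y t) = (v (t+1) - v t) / c"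
          unfolding fwd_diff_def v_def c_def[symmetric] shift ..
        then show "G (line y t) = (if t \<noteq> L then (1/c^2) * (v (t+1) - v t)^2 else 0)"
          using c by (simp add: G_def line_nth bj power_divide)
      qed
      also have "\<dots> = (\<Sum>t\<in>{t\<in>{K..L}. t \<noteq> L}. (1/c^2) * (v (t+1) - v t)^2)"
        by (rule sum.inter_filter[symmetric]) simp
      also have "{t\<in>{K..L}. t \<noteq> L} = {K..<L}" by auto
      finally show ?thesis by (simp add: sum_distrib_left)
    qed
    have "(\<Sum>t\<in>{K<..<L}. (v t)^2/(of_int(min (t-K) (L-t)))^2) \<le> 4*(\<Sum>t\<in>{K..<L}. (v(t+1) - v t)^2)"
      by (rule hardy_1d) (use bdK[OF y] KL in \<open>auto simp: v_def\<close>)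
    then show "(\<Sum>t\<in>{K..L}. F (line y t)) \<le> 4 * (\<Sum>t\<in>{K..L}. G (line y t))"
      unfolding e1 e2 using c by (simp add: divide_right_mono)
  qed
  also have "\<dots> = 4 * (\<Sum>x\<in>grid_closure a b h - grid_upper_face a b h j. (fwd_diff h j u x)^2)"
    unfolding R by (simp add: sum_distrib_left)
  finally show ?thesis unfolding f_def .
qed

end


context gsetup begin

lemma pointwise:
  assumes x: "x \<in> grid_interior a b h"
  shows "(u x)^2 / (infdist x (grid_boundary a b h))^2
     \<le> (\<Sum>j\<in>UNIV. (u x)^2 / (min (x$j - a$j) (b$j - x$j))^2)"
proof -
  define d where "d j = min (x$j - a$j) (b$j - x$j)" for j
  have dpos: "d j > 0" for j using x unfolding interior_iff d_def by auto
  define m where "m = Min (range d)"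
  have "m \<in> range d" unfolding m_def by (rule Min_in) auto
  then obtain j0 where j0: "m = d j0" by auto
  have dmin: "d j0 \<le> d j" for j unfolding j0[symmetric] m_def by (rule Min_le) auto
  let ?B = "grid_boundary a b h"
  have "(u x)^2 / (infdist x ?B)^2 \<le> (u x)^2 / (d j0)^2"
  proof (cases "?B = {}")
    case True then show ?thesis by (simp add: infdist_def)
  next
    case False
    have "d j0 \<le> infdist x ?B" unfolding infdist_notempty[OF False]
    proof (rule cINF_greatest[OF False])
      fix y assume y: "y \<in> ?B"
      then obtain i where i: "y$i = a$i \<or> y$i = b$i" unfolding boundary_iff by auto
      have "\<bar>x$i - y$i\<bar> \<le> dist x y" unfolding dist_norm
        using component_le_norm_cart[of "x - y" i] by simp
      moreover have "d i \<le> \<bar>x$i - y$i\<bar>" using i unfolding d_def by auto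
      ultimately show "d j0 \<le> dist x y" using dmin[of i] by linarith
    qed
    then have "(d j0)^2 \<le> (infdist x ?B)^2" using dpos[of j0] by (simp add: power_mono)
    moreover have "0 < (d j0)^2" using dpos[of j0] by simp
    ultimately have "0 < (infdist x ?B)^2 * (d j0)^2" by (intro mult_pos_pos) linarith+
    with \<open>(d j0)^2 \<le> (infdist x ?B)^2\<close> show ?thesis by (intro divide_left_mono) auto
  qed
  also have "\<dots> \<le> (\<Sum>j\<in>UNIV. (u x)^2 / (d j)^2)"
    by (rule member_le_sum) auto
  finally show ?thesis unfolding d_def .
qed

lemma total:
  assumes u0: "\<forall>x\<in>grid_boundary a b h. u x = 0"
  shows "(\<Sum>x\<in>grid_interior a b h. (u x)^2 / (infdist x (grid_boundary a b h))^2 * prod (\<lambda>i. h$i) UNIV)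
       \<le> 4 * (\<Sum>i\<in>UNIV. \<Sum>x\<in>grid_closure a b h - grid_upper_face a b h i.
                 \<bar>fwd_diff h i u x\<bar>^2 * prod (\<lambda>i. h$i) UNIV)"
proof -
  define H where "H = prod (\<lambda>i. h$i) UNIV"
  have H: "H > 0" unfolding H_def using hpos by (simp add: prod_pos)
  have "(\<Sum>x\<in>grid_interior a b h. (u x)^2 / (infdist x (grid_boundary a b h))^2 * H)
     \<le> (\<Sum>x\<in>grid_interior a b h. (\<Sum>j\<in>UNIV. (u x)^2 / (min (x$j - a$j) (b$j - x$j))^2) * H)"
    by (rule sum_mono, rule mult_right_mono[OF pointwise]) (use H in auto)
  also have "\<dots> = H * (\<Sum>j\<in>UNIV. \<Sum>x\<in>grid_interior a b h. (u x)^2 / (min (x$j - a$j) (b$j - x$j))^2)"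
    by (simp add: sum.swap[of _ _ UNIV] sum_distrib_left sum_distrib_right mult.commute)
  also have "\<dots> \<le> H * (\<Sum>j\<in>UNIV. 4 * (\<Sum>x\<in>grid_closure a b h - grid_upper_face a b h j. (fwd_diff h j u x)^2))"
    by (intro mult_left_mono sum_mono per_dir[OF u0]) (use H in auto)
  also have "\<dots> = 4 * (\<Sum>i\<in>UNIV. \<Sum>x\<in>grid_closure a b h - grid_upper_face a b h i.
                 \<bar>fwd_diff h i u x\<bar>^2 * H)"
    by (simp add: sum_distrib_left sum_distrib_right mult.commute mult.left_commute)
  finally show ?thesis unfolding H_def .
qed

end

theorem mainTheorem8:
  fixes a b :: "real^'n"
  assumes "\<forall>i. a$i < b$i"
  shows "\<exists>C. 0 < C \<and> C \<le> 4 \<and>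
    (\<forall>h u. admissible_mesh a b h \<longrightarrow>
       (\<forall>x\<in>grid_boundary a b h. u x = 0) \<longrightarrow>
       (\<Sum>x\<in>grid_interior a b h. (u x)^2 / (infdist x (grid_boundary a b h))^2 * prod (\<lambda>i. h$i) UNIV)
       \<le> C * (\<Sum>i\<in>UNIV. \<Sum>x\<in>grid_closure a b h - grid_upper_face a b h i.
                 \<bar>fwd_diff h i u x\<bar>^2 * prod (\<lambda>i. h$i) UNIV))"
proof (intro exI[of _ 4] conjI allI impI)
  fix h :: "real^'n" and u :: "real^'n \<Rightarrow> real"
  assume adm: "admissible_mesh a b h" and u0: "\<forall>x\<in>grid_boundary a b h. u x = 0"
  have "\<forall>i. \<exists>p::int\<times>int. a$i = of_int (fst p) * h$i \<and> b$i = of_int (snd p) * h$i \<and> snd p - fst p > 1"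
    using adm unfolding admissible_mesh_def by fastforce
  then obtain p :: "'n \<Rightarrow> int\<times>int" where p: "\<And>i. a$i = of_int (fst (p i)) * h$i \<and> b$i = of_int (snd (p i)) * h$i \<and> snd (p i) - fst (p i) > 1"
    by metis
  interpret gsetup a b h "\<lambda>i. fst (p i)" "\<lambda>i. snd (p i)"
    using adm p by unfold_locales (auto simp: admissible_mesh_def)
  show "(\<Sum>x\<in>grid_interior a b h. (u x)^2 / (infdist x (grid_boundary a b h))^2 * prod (\<lambda>i. h$i) UNIV)
       \<le> 4 * (\<Sum>i\<in>UNIV. \<Sum>x\<in>grid_closure a b h - grid_upper_face a b h i.
                 \<bar>fwd_diff h i u x\<bar>^2 * prod (\<lambda>i. h$i) UNIV)"
    by (rule total[OF u0])
qed simp_all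

end
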